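(* Assume Hypothesis (H), and let $b=b_1+b_2$, $M=N-P$ be splittings as described, with $J(x):=N-b_1(\cdot,x)$, $g(x):=a+Px+b_2(x,x)$, $f(x):=J(x)^{-1}g(x)$. Let $\hat f(x):=(M-b(\cdot,x))^{-1}a$ (the map obtained for the particular choice $b_1=b$, $b_2=0$, $N=M$, $P=0$). Then for every $x$ with $0\leq x\leq x_\ast$ and $F(x)\leq 0$, and every integer $k\geq 0$, one has $\hat f^{\,k}(x)\geq f^{\,k}(x)$ (where $f^k$ denotes the $k$-fold composition).
   Context: Inequalities between vectors/matrices are componentwise. An M-matrix is a matrix $sI-P$ with $P\geq0$ entrywise and $s\geq\rho(P)$ ($\rho$ = spectral radius). Let $M\in\mathbb R^{n\times n}$ be a nonsingular M-matrix, $a\in\mathbb R^n$ with $a\geq 0$, and $b:\mathbb R^n\times\mathbb R^n\to\mathbb R^n$ a bilinear map (not necessarily symmetric) with $b(x,y)\geq 0$ whenever $x,y\geq 0$. A solution of $Mx=a+b(x,x)$ means a vector $x\geq 0$ satisfying it; a solution $x_\ast$ is minimal if $x_\ast\leq y$ for every solution $y$. $F(x):=Mx-a-b(x,x)$. For a bilinear map $c$ and $x\in\mathbb R^n$, $c(x,\cdot)$ and $c(\cdot,x)$ denote the $n\times n$ matrices of $y\mapsto c(x,y)$ and $y\mapsto c(y,x)$; $F'_x:=M-b(x,\cdot)-b(\cdot,x)$. Hypothesis (H): the equation has a minimal solution $x_\ast$, $x_\ast>0$ (all components strictly positive), and either $F'_{x_\ast}$ is nonsingular, or $F'_{x_\ast}$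 is irreducible and $F'_x\neq F'_{x_\ast}$ for every $x$ with $0\leq x\leq x_\ast$, $x\neq x_\ast$. Splittings: $b=b_1+b_2$ with $b_1,b_2$ bilinear and $b_i(x,y)\geq0$ for $x,y\geq0$; $M=N-P$ with $N$ an M-matrix and $P\geq 0$. *)

theory Defs
  imports "HOL-Analysis.Analysis"
begin

definition spec_radius :: "real^'n^'n \<Rightarrow> real" where
  "spec_radius A = Sup {cmod l | l. \<exists>v::complex^'n. v \<noteq> 0 \<and>
      (\<chi> i j. complex_of_real (A$i$j)) *v v = l *s v}"

definition M_matrix :: "real^'n^'n \<Rightarrow> bool" where
  "M_matrix A \<longleftrightarrow> (\<exists>s (P::real^'n^'n). 0 \<le> P \<and> s \<ge> spec_radius P \<and> A = s *\<^sub>R mat 1 - P)"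

definition nonsingular_M_matrix :: "real^'n^'n \<Rightarrow> bool" where
  "nonsingular_M_matrix A \<longleftrightarrow> M_matrix A \<and> invertible A"

definition irreducible_mat :: "real^'n^'n \<Rightarrow> bool" where
  "irreducible_mat A \<longleftrightarrow> \<not> (\<exists>I::'n set. I \<noteq> {} \<and> I \<noteq> UNIV \<and>
      (\<forall>i\<in>I. \<forall>j. j \<notin> I \<longrightarrow> A$i$j = 0))"

definition nonneg_bilinear :: "(real^'n \<Rightarrow> real^'n \<Rightarrow> real^'n) \<Rightarrow> bool" where
  "nonneg_bilinear b \<longleftrightarrow> bilinear b \<and> (\<forall>x y. 0 \<le> x \<longrightarrow> 0 \<le> y \<longrightarrow> 0 \<le> b x y)"

definition is_solution :: "real^'n^'n \<Rightarrow> real^'n \<Rightarrow> (real^'n \<Rightarrow> real^'n \<Rightarrow> real^'n) \<Rightarrow> real^'n \<Rightarrow> bool" where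
  "is_solution M a b x \<longleftrightarrow> 0 \<le> x \<and> M *v x = a + b x x"

definition is_minimal_solution :: "real^'n^'n \<Rightarrow> real^'n \<Rightarrow> (real^'n \<Rightarrow> real^'n \<Rightarrow> real^'n) \<Rightarrow> real^'n \<Rightarrow> bool" where
  "is_minimal_solution M a b x \<longleftrightarrow> is_solution M a b x \<and> (\<forall>y. is_solution M a b y \<longrightarrow> x \<le> y)"

definition Fmap :: "real^'n^'n \<Rightarrow> real^'n \<Rightarrow> (real^'n \<Rightarrow> real^'n \<Rightarrow> real^'n) \<Rightarrow> real^'n \<Rightarrow> real^'n" where
  "Fmap M a b x = M *v x - a - b x x"

definition bl_left :: "(real^'n \<Rightarrow> real^'n \<Rightarrow> real^'n) \<Rightarrow> real^'n \<Rightarrow> real^'n^'n" where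
  "bl_left c x = matrix (\<lambda>y. c x y)"
definition bl_right :: "(real^'n \<Rightarrow> real^'n \<Rightarrow> real^'n) \<Rightarrow> real^'n \<Rightarrow> real^'n^'n" where
  "bl_right c x = matrix (\<lambda>y. c y x)"

definition Fderiv :: "real^'n^'n \<Rightarrow> (real^'n \<Rightarrow> real^'n \<Rightarrow> real^'n) \<Rightarrow> real^'n \<Rightarrow> real^'n^'n" where
  "Fderiv M b x = M - bl_left b x - bl_right b x"

definition hypH :: "real^'n^'n \<Rightarrow> real^'n \<Rightarrow> (real^'n \<Rightarrow> real^'n \<Rightarrow> real^'n) \<Rightarrow> real^'n \<Rightarrow> bool" where
  "hypH M a b xs \<longleftrightarrow> is_minimal_solution M a b xs \<and> (\<forall>i. 0 < xs$i) \<and>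
     (invertible (Fderiv M b xs) \<or>
      (irreducible_mat (Fderiv M b xs) \<and>
       (\<forall>x. 0 \<le> x \<and> x \<le> xs \<and> x \<noteq> xs \<longrightarrow> Fderiv M b x \<noteq> Fderiv M b xs)))"

end

theory Submission
  imports Defs
begin

definition Zmat :: "real^'n^'n \<Rightarrow> bool" where
  "Zmat A \<longleftrightarrow> (\<forall>i j. i \<noteq> j \<longrightarrow> A$i$j \<le> 0)"

lemma vle_iff: "(x::real^'n) \<le> y \<longleftrightarrow> (\<forall>i. x$i \<le> y$i)"
  by (simp add: less_eq_vec_def)

lemma Mmat_Z: "M_matrix A \<Longrightarrow> Zmat A"
  unfolding M_matrix_def Zmat_def
  by (auto simp: mat_def vle_iff less_eq_vec_def)

lemma nb_mono:
  assumes c: "nonneg_bilinear c" and "0 \<le> x" "x \<le> x'" "0 \<le> y" "y \<le> y'"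
  shows "c x y \<le> c x' y'"
proof -
  have bl: "bilinear c" using c by (simp add: nonneg_bilinear_def)
  have "c x' y' - c x y = c (x' - x) y' + c x (y' - y)"
    using bilinear_lsub[OF bl] bilinear_rsub[OF bl] by simp
  moreover have "0 \<le> c (x' - x) y'" "0 \<le> c x (y' - y)"
    using c assms by (auto simp: nonneg_bilinear_def)
  ultimately show ?thesis by (metis add_nonneg_nonneg diff_ge_0_iff_ge)
qed

lemma nb_nonneg: "nonneg_bilinear c \<Longrightarrow> 0 \<le> x \<Longrightarrow> 0 \<le> y \<Longrightarrow> 0 \<le> c x y"
  by (simp add: nonneg_bilinear_def)

lemma mv_comp: "(A *v x)$i = (\<Sum>j\<in>UNIV. A$i$j * x$j)"
  by (simp add: matrix_vector_mult_def)

lemma mv_nonneg: "0 \<le> (A::real^'n^'m) \<Longrightarrow> 0 \<le> x \<Longrightarrow> 0 \<le> A *v x"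
  by (auto simp: vle_iff mv_comp less_eq_vec_def intro!: sum_nonneg)

lemma bl_right_mv: "bilinear c \<Longrightarrow> bl_right c x *v y = c y x"
  unfolding bl_right_def bilinear_def
  by (simp add: matrix_works linear_matrix_vector_mul_eq)

lemma bl_right_entry: "bl_right c x $ i $ j = c (axis j 1) x $ i"
  by (simp add: bl_right_def matrix_def)

lemma nb_bl_right_nonneg: "nonneg_bilinear c \<Longrightarrow> 0 \<le> x \<Longrightarrow> 0 \<le> bl_right c x $ i $ j"
  unfolding bl_right_entry nonneg_bilinear_def
  by (auto simp: vle_iff axis_def)

lemma max_principle:
  fixes A :: "real^'n^'n"
  assumes Z: "Zmat A" and v: "\<forall>i. 0 < v$i" and Av: "0 \<le> A *v v"
    and Ay: "0 \<le> A *v y" and ny: "\<not> 0 \<le> y"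
  shows "\<exists>K. K \<noteq> {} \<and> (\<forall>k\<in>K. (A *v v)$k = 0 \<and> (\<forall>j. j \<notin> K \<longrightarrow> A$k$j = 0))"
proof -
  define r where "r i = - y$i / v$i" for i
  define t where "t = Max (range r)"
  obtain i0 where i0: "y$i0 < 0" using ny unfolding vle_iff by (metis not_le zero_index)
  have rle: "r i \<le> t" for i unfolding t_def by simp
  have "t \<in> range r" unfolding t_def by (rule Max_in) auto
  then obtain m where m: "t = r m" by auto
  have "r i0 > 0" using i0 v[rule_format, of i0] by (simp add: r_def divide_neg_pos)
  hence tpos: "t > 0" using rle[of i0] by linarith
  define z where "z = y + t *s v"
  have zc: "z$i = y$i + t * v$i" for i by (simp add: z_def)
  have z0: "0 \<le> z$i" for i
  proof -
    have "- y$i / v$i \<le> t" using rle[of i] by (simp add: r_def)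
    hence "- y$i \<le> t * v$i" using v[rule_format, of i] by (simp add: field_simps)
    thus ?thesis by (simp add: zc)
  qed
  define K where "K = {k. z$k = 0}"
  have "m \<in> K" using m v[rule_format, of m] by (simp add: K_def zc r_def)
  hence Kne: "K \<noteq> {}" by auto
  have "A *v z = A *v y + t *s (A *v v)" 
    by (simp add: z_def matrix_vector_right_distrib matrix_vector_mult_scaleR scalar_mult_eq_scaleR)
  hence Azc: "(A *v z)$k = (A *v y)$k + t * (A *v v)$k" for k by simp
  have "(A *v v)$k = 0 \<and> (\<forall>j. j \<notin> K \<longrightarrow> A$k$j = 0)" if kK: "k \<in> K" for k
  proof -
    have terms: "A$k$j * z$j \<le> 0" for j
    proof (cases "j = k")
      case True then show ?thesis using kK by (simp add: K_def)
    next
      case False then show ?thesis using Z z0[of j] by (simp add: Zmat_def mult_nonpos_nonneg)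
    qed
    have ge: "(A *v z)$k \<ge> t * (A *v v)$k" using Azc[of k] Ay by (simp add: vle_iff)
    have ge0: "t * (A *v v)$k \<ge> 0" using tpos Av by (simp add: vle_iff)
    have le: "(A *v z)$k \<le> 0" unfolding mv_comp by (rule sum_nonpos) (use terms in auto)
    have s0: "(\<Sum>j\<in>UNIV. A$k$j * z$j) = 0" using ge ge0 le unfolding mv_comp by linarith
    hence "(\<Sum>j\<in>UNIV. - (A$k$j * z$j)) = 0" by (simp add: sum_negf)
    hence "\<forall>j\<in>UNIV. - (A$k$j * z$j) = 0"
      using sum_nonneg_eq_0_iff[of UNIV "\<lambda>j. - (A$k$j * z$j)"] terms by auto
    hence allz: "\<forall>j. A$k$j * z$j = 0" by auto
    have "(A *v v)$k = 0" using ge ge0 le tpos by (simp add: zero_le_mult_iff) (smt (verit) mult_pos_pos)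
    moreover have "A$k$j = 0" if "j \<notin> K" for j
    proof -
      have "z$j \<noteq> 0" using that by (simp add: K_def)
      thus ?thesis using allz by auto
    qed
    ultimately show ?thesis by blast
  qed
  thus ?thesis using Kne by blast
qed

lemma Zinv_pos:
  fixes A :: "real^'n^'n"
  assumes Z: "Zmat A" and inv: "invertible A" and v: "\<forall>i. 0 < v$i" and Av: "0 \<le> A *v v"
    and Ay: "0 \<le> A *v y"
  shows "0 \<le> y"
proof (rule ccontr)
  assume "\<not> 0 \<le> y"
  then obtain K where Kne: "K \<noteq> {}" and K: "\<forall>k\<in>K. (A *v v)$k = 0 \<and> (\<forall>j. j \<notin> K \<longrightarrow> A$k$j = 0)"
    using max_principle[OF Z v Av Ay] by blast
  define W where "W = {x::real^'n. \<forall>k\<in>K. x$k = 0}"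
  have subW: "subspace W" unfolding W_def subspace_def by auto
  have rowK: "(A *v x)$k = (\<Sum>j\<in>UNIV. A$k$j * (if j \<in> K then x$j else 0))" if "k \<in> K" for k x
    unfolding mv_comp using K that by (intro sum.cong) auto
  have img: "(*v) A ` W \<subseteq> W"
  proof
    fix z assume "z \<in> (*v) A ` W"
    then obtain x where x: "x \<in> W" "z = A *v x" by auto
    have "(A *v x)$k = 0" if "k \<in> K" for k
      unfolding rowK[OF that] using x(1) by (intro sum.neutral) (auto simp: W_def)
    thus "z \<in> W" using x by (simp add: W_def)
  qed
  have injA: "inj ((*v) A)" by (rule inj_matrix_vector_mult[OF inv])
  have lin: "linear ((*v) A)" by (simp add: linear_matrix_vector_mul_eq[symmetric] matrix_vector_mul_linear)
  have "dim ((*v) A ` W) = dim W"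
    by (rule dim_image_eq[OF lin]) (use injA in \<open>auto simp: inj_on_def inj_def\<close>)
  moreover have "subspace ((*v) A ` W)" by (rule real_vector.linear_subspace_image[OF lin subW])
  ultimately have eqW: "(*v) A ` W = W" using subspace_dim_equal[OF _ subW img] by simp
  define u where "u = (\<chi> i. if i \<in> K then v$i else 0)"
  have "A *v u \<in> W"
  proof -
    have "(A *v u)$k = 0" if "k \<in> K" for k
    proof -
      have "(A *v u)$k = (A *v v)$k"
        unfolding rowK[OF that, of u] rowK[OF that, of v] by (intro sum.cong) (auto simp: u_def)
      thus ?thesis using K that by simp
    qed
    thus ?thesis by (simp add: W_def)
  qed
  then obtain w where "w \<in> W" "A *v w = A *v u" using eqW by (metis imageE)
  hence "u \<in> W" using injA by (metis injD)
  moreover obtain k where "k \<in> K" using Kne by auto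
  ultimately have "u$k = 0" by (simp add: W_def)
  moreover have "u$k = v$k" using \<open>k \<in> K\<close> by (simp add: u_def)
  ultimately show False using v by (metis less_irrefl)
qed

lemma inv_from_pos:
  fixes A :: "real^'n^'n"
  assumes "\<And>y. 0 \<le> A *v y \<Longrightarrow> 0 \<le> y"
  shows "invertible A"
proof -
  have "inj ((*v) A)"
  proof (rule injI)
    fix x y assume "A *v x = A *v y"
    hence "A *v (x - y) = 0" "A *v (y - x) = 0" by (simp_all add: matrix_vector_mult_diff_distrib)
    hence "0 \<le> x - y" "0 \<le> y - x" using assms by (metis order_refl)+
    thus "x = y" by (simp add: order_antisym)
  qed
  thus ?thesis using matrix_left_invertible_injective invertible_left_inverse by blast
qed

lemma matrix_inv_props:
  fixes A :: "real^'n^'n"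
  assumes "invertible A"
  shows "A ** matrix_inv A = mat 1" "matrix_inv A ** A = mat 1"
proof -
  have "\<exists>A'. A ** A' = mat 1 \<and> A' ** A = mat 1" using assms by (simp add: invertible_def)
  from someI_ex[OF this] show "A ** matrix_inv A = mat 1" "matrix_inv A ** A = mat 1"
    by (simp_all add: matrix_inv_def)
qed

lemma matrix_inv_mv:
  fixes A :: "real^'n^'n"
  assumes "invertible A"
  shows "A *v (matrix_inv A *v w) = w"
  by (simp add: matrix_vector_mul_assoc matrix_inv_props[OF assms])

lemma super_sol:
  fixes M :: "real^'n^'n"
  assumes inv: "invertible M" and ipos: "\<And>y. 0 \<le> M *v y \<Longrightarrow> 0 \<le> y"
    and a: "0 \<le> a" and b: "nonneg_bilinear b" and z0: "0 \<le> z" and zs: "a + b z z \<le> M *v z"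
  shows "\<exists>s. is_solution M a b s \<and> s \<le> z"
proof -
  define s where "s = rec_nat 0 (\<lambda>_ x. matrix_inv M *v (a + b x x))"
  have s0: "s 0 = 0" by (simp add: s_def)
  have sS: "M *v s (Suc k) = a + b (s k) (s k)" for k
    by (simp add: s_def matrix_inv_mv[OF inv])
  have bl: "bilinear b" using b by (simp add: nonneg_bilinear_def)
  have inv_le: "x \<le> y" if "M *v x \<le> M *v y" for x y
  proof -
    have "0 \<le> M *v (y - x)" using that by (simp add: matrix_vector_mult_diff_distrib)
    thus ?thesis using ipos by fastforce
  qed
  have main: "0 \<le> s k \<and> s k \<le> s (Suc k) \<and> s (Suc k) \<le> z" for k
  proof (induction k)
    case 0
    have "b 0 0 = 0" using bilinear_lzero[OF bl] by simp
    hence e: "M *v s (Suc 0) = a" using sS[of 0] s0 by simp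
    have "M *v s 0 \<le> M *v s (Suc 0)" using e a s0 by simp
    moreover have "M *v s (Suc 0) \<le> M *v z"
    proof -
      have "a \<le> a + b z z" using nb_nonneg[OF b z0 z0] by simp
      thus ?thesis using e zs by (metis order_trans)
    qed
    ultimately show ?case using inv_le s0 by simp
  next
    case (Suc k)
    hence h: "0 \<le> s k" "s k \<le> s (Suc k)" "s (Suc k) \<le> z" by auto
    have h1: "0 \<le> s (Suc k)" using h by auto
    have "M *v s (Suc k) \<le> M *v s (Suc (Suc k))"
      unfolding sS using nb_mono[OF b h(1) h(2) h(1) h(2)] by simp
    moreover have "M *v s (Suc (Suc k)) \<le> M *v z"
    proof -
      have "a + b (s (Suc k)) (s (Suc k)) \<le> a + b z z" using nb_mono[OF b h1 h(3) h1 h(3)] by simp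
      thus ?thesis unfolding sS using zs by (rule order_trans)
    qed
    ultimately show ?case using inv_le[of "s (Suc k)" "s (Suc (Suc k))"] inv_le[of "s (Suc (Suc k))" z] h1 by simp
  qed
  have incs: "incseq (\<lambda>k. s k $ i)" for i
  proof (rule incseq_SucI)
    fix k show "s k $ i \<le> s (Suc k) $ i" using main[of k] by (simp add: vle_iff)
  qed
  have bnd: "s k $ i \<le> z $ i" for k i
    using main[of k] unfolding vle_iff by (meson order_trans)
  have ex: "\<forall>i. \<exists>L. (\<lambda>k. s k $ i) \<longlonglongrightarrow> L"
  proof
    fix i
    obtain L where "(\<lambda>k. s k $ i) \<longlonglongrightarrow> L" using incseq_convergent[OF incs[of i], of "z$i"] bnd by blast
    thus "\<exists>L. (\<lambda>k. s k $ i) \<longlonglongrightarrow> L" by blast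
  qed
  obtain Lf where Lf: "\<And>i. (\<lambda>k. s k $ i) \<longlonglongrightarrow> Lf i" using choice[OF ex] by blast
  define L where "L = (\<chi> i. Lf i)"
  have sL: "s \<longlonglongrightarrow> L" by (rule vec_tendstoI) (simp add: L_def Lf)
  have t1: "(\<lambda>k. M *v s (Suc k)) \<longlonglongrightarrow> M *v L"
    using bounded_linear.tendsto[OF matrix_vector_mul_bounded_linear LIMSEQ_Suc[OF sL]] .
  have bb: "bounded_bilinear b" using bl bilinear_conv_bounded_bilinear by blast
  have t2: "(\<lambda>k. a + b (s k) (s k)) \<longlonglongrightarrow> a + b L L"
    by (intro tendsto_add tendsto_const bounded_bilinear.tendsto[OF bb] sL)
  have "M *v L = a + b L L"
    using LIMSEQ_unique[OF t1] t2 unfolding sS by simp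
  moreover have "0 \<le> L"
    unfolding vle_iff
  proof
    fix i show "0 $ i \<le> L $ i"
      using LIMSEQ_le_const[OF Lf[of i]] main by (auto simp: L_def vle_iff)
  qed
  moreover have "L \<le> z"
    unfolding vle_iff
  proof
    fix i show "L $ i \<le> z $ i"
      using LIMSEQ_le_const2[OF Lf[of i]] bnd by (auto simp: L_def)
  qed
  ultimately show ?thesis by (auto simp: is_solution_def)
qed

locale qve =
  fixes M :: "real^'n^'n" and a xs :: "real^'n" and b :: "real^'n \<Rightarrow> real^'n \<Rightarrow> real^'n"
  assumes Minv: "invertible M" and MZ: "Zmat M" and a0: "0 \<le> a" and bnb: "nonneg_bilinear b"
    and minsol: "is_minimal_solution M a b xs" and xpos: "\<forall>i. 0 < xs$i"
begin

lemma xs0: "0 \<le> xs" using xpos by (auto simp: vle_iff less_imp_le)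

lemma Mxs: "M *v xs = a + b xs xs" using minsol by (simp add: is_minimal_solution_def is_solution_def)

lemma Mpos: "0 \<le> M *v y \<Longrightarrow> 0 \<le> y"
proof -
  have "0 \<le> M *v xs" unfolding Mxs using a0 nb_nonneg[OF bnb xs0 xs0] by simp
  thus "0 \<le> M *v y \<Longrightarrow> 0 \<le> y" using Zinv_pos[OF MZ Minv xpos] by blast
qed

lemma no_super: "0 \<le> z \<Longrightarrow> a + b z z \<le> M *v z \<Longrightarrow> xs \<le> z"
  using super_sol[OF Minv Mpos a0 bnb] minsol
  by (metis is_minimal_solution_def order_trans)

end

locale qve_split = qve M a xs b for M :: "real^'n^'n" and a xs b +
  fixes N P :: "real^'n^'n" and b1 b2 :: "real^'n \<Rightarrow> real^'n \<Rightarrow> real^'n"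
  assumes b1: "nonneg_bilinear b1" and b2: "nonneg_bilinear b2"
    and bsplit: "\<And>x y. b x y = b1 x y + b2 x y"
    and NZ: "Zmat N" and P0: "0 \<le> P" and MNP: "M = N - P"
begin

lemma vleD: "(x::real^'n) \<le> y \<Longrightarrow> x$i \<le> y$i" by (simp add: vle_iff)

lemma bl1: "bilinear b1" using b1 by (simp add: nonneg_bilinear_def)
lemma bl2: "bilinear b2" using b2 by (simp add: nonneg_bilinear_def)
lemma NMP: "N = M + P" using MNP by simp

lemma Jmv: "(N - bl_right b1 y) *v w = N *v w - b1 w y"
  by (simp add: matrix_vector_mult_diff_rdistrib bl_right_mv[OF bl1])

lemma Nmv: "N *v w = M *v w + P *v w"
  by (simp add: NMP matrix_vector_mult_add_rdistrib)

lemma Jpos: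
  assumes y0: "0 \<le> y" and yx: "y \<le> xs" and Aw: "0 \<le> (N - bl_right b1 y) *v w"
  shows "0 \<le> w"
proof (rule ccontr)
  assume nw: "\<not> 0 \<le> w"
  define A where "A = N - bl_right b1 y"
  have AZ: "Zmat A" unfolding Zmat_def A_def
  proof (intro allI impI)
    fix i j :: 'n assume "i \<noteq> j"
    hence "N$i$j \<le> 0" using NZ by (simp add: Zmat_def)
    moreover have "0 \<le> bl_right b1 y $ i $ j" by (rule nb_bl_right_nonneg[OF b1 y0])
    ultimately show "(N - bl_right b1 y) $ i $ j \<le> 0" by simp
  qed
  have Axs: "A *v xs = a + P *v xs + b2 xs xs + b1 xs (xs - y)"
    unfolding A_def Jmv Nmv Mxs bsplit bilinear_rsub[OF bl1] by (simp add: algebra_simps)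
  have t1: "0 \<le> P *v xs" by (rule mv_nonneg[OF P0 xs0])
  have t2: "0 \<le> b2 xs xs" by (rule nb_nonneg[OF b2 xs0 xs0])
  have t3: "0 \<le> b1 xs (xs - y)" by (rule nb_nonneg[OF b1 xs0]) (use yx in simp)
  have Axs0: "0 \<le> A *v xs" unfolding Axs using a0 t1 t2 t3 by simp
  obtain K where Kne: "K \<noteq> {}" and K: "\<forall>k\<in>K. (A *v xs)$k = 0 \<and> (\<forall>j. j \<notin> K \<longrightarrow> A$k$j = 0)"
    using max_principle[OF AZ xpos Axs0 Aw[folded A_def] nw] by blast
  have Kfacts: "a$k = 0 \<and> (P *v xs)$k = 0 \<and> b2 xs xs $ k = 0 \<and> b1 xs (xs - y) $ k = 0" if "k \<in> K" for k
  proof -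
    have "a$k + (P *v xs)$k + b2 xs xs $ k + b1 xs (xs - y) $ k = 0"
      using K that by (simp add: Axs)
    moreover have "0 \<le> a$k" "0 \<le> (P *v xs)$k" "0 \<le> b2 xs xs $ k" "0 \<le> b1 xs (xs - y) $ k"
      using a0 t1 t2 t3 by (simp_all add: vle_iff)
    ultimately show ?thesis by linarith
  qed
  have Pk: "P$k$j = 0" if "k \<in> K" for k j
  proof -
    have "(\<Sum>j\<in>UNIV. P$k$j * xs$j) = 0" using Kfacts[OF that] by (simp add: mv_comp)
    moreover have "\<forall>j\<in>UNIV. 0 \<le> P$k$j * xs$j" using P0 xpos
      by (auto simp: vle_iff less_eq_vec_def less_imp_le)
    ultimately have "\<forall>j\<in>UNIV. P$k$j * xs$j = 0"
      using sum_nonneg_eq_0_iff[of UNIV "\<lambda>j. P$k$j * xs$j"] by simp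
    thus ?thesis using xpos by (metis UNIV_I less_irrefl mult_eq_0_iff)
  qed
  have Mk: "M$k$j = 0 \<and> b1 (axis j 1) y $ k = 0" if "k \<in> K" "j \<notin> K" for k j
  proof -
    have kj: "k \<noteq> j" using that by auto
    have "A$k$j = 0" using K that by blast
    hence "M$k$j + P$k$j - b1 (axis j 1) y $ k = 0" by (simp add: A_def NMP bl_right_entry)
    moreover have "M$k$j \<le> 0" using MZ kj by (simp add: Zmat_def)
    moreover have "0 \<le> b1 (axis j 1) y $ k" using nb_bl_right_nonneg[OF b1 y0] by (simp add: bl_right_entry)
    ultimately show ?thesis using Pk[OF that(1), of j] by linarith
  qed
  define z where "z = (\<chi> i. if i \<in> K then 0 else xs$i)"
  have z0: "0 \<le> z" using xs0 by (auto simp: z_def vle_iff)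
  have zx: "z \<le> xs" using xs0 by (auto simp: z_def vle_iff)
  have super: "a + b z z \<le> M *v z"
    unfolding vle_iff
  proof
    fix i
    show "(a + b z z)$i \<le> (M *v z)$i"
    proof (cases "i \<in> K")
      case True
      have Mz: "(M *v z)$i = 0" unfolding mv_comp
        by (rule sum.neutral) (use Mk[OF True] in \<open>auto simp: z_def\<close>)
      have b2z: "b2 z z $ i \<le> 0"
        using vleD[OF nb_mono[OF b2 z0 zx z0 zx], of i] Kfacts[OF True] by simp
      have "b1 z y $ i = (bl_right b1 y *v z)$i" by (simp add: bl_right_mv[OF bl1])
      also have "\<dots> = 0" unfolding mv_comp bl_right_entry
        by (rule sum.neutral) (use Mk[OF True] in \<open>auto simp: z_def\<close>)
      finally have b1zy: "b1 z y $ i = 0" .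
      have "b1 z (xs - y) \<le> b1 xs (xs - y)"
        by (rule nb_mono[OF b1 z0 zx]) (use yx in auto)
      hence b1zx: "b1 z (xs - y) $ i \<le> 0" using Kfacts[OF True] vleD[of "b1 z (xs - y)" "b1 xs (xs - y)" i] by simp
      have "b1 z xs = b1 z y + b1 z (xs - y)" by (simp add: bilinear_rsub[OF bl1])
      hence "b1 z xs $ i \<le> 0" using b1zy b1zx by simp
      moreover have "b1 z z \<le> b1 z xs" by (rule nb_mono[OF b1 z0 order_refl z0 zx])
      ultimately have "b1 z z $ i \<le> 0" using vleD[of "b1 z z" "b1 z xs" i] by linarith
      thus ?thesis using Mz b2z Kfacts[OF True] by (simp add: bsplit)
    next
      case False
      define u where "u = (\<chi> i. if i \<in> K then xs$i else 0)"
      have zu: "z = xs - u" by (simp add: z_def u_def vec_eq_iff)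
      have "(M *v u)$i \<le> 0" unfolding mv_comp
      proof (rule sum_nonpos)
        fix j
        show "M$i$j * u$j \<le> 0"
        proof (cases "j \<in> K")
          case True
          hence "i \<noteq> j" using False by auto
          hence "M$i$j \<le> 0" using MZ by (simp add: Zmat_def)
          thus ?thesis using True xpos by (simp add: u_def mult_nonpos_nonneg less_imp_le)
        qed (simp add: u_def)
      qed
      hence "(M *v xs)$i \<le> (M *v z)$i" by (simp add: zu matrix_vector_mult_diff_distrib)
      moreover have "b z z \<le> b xs xs" by (rule nb_mono[OF bnb z0 zx z0 zx])
      ultimately show ?thesis unfolding Mxs using vleD[of "b z z" "b xs xs" i] by simp
    qed
  qed
  have "xs \<le> z" by (rule no_super[OF z0 super])
  moreover obtain k where "k \<in> K" using Kne by auto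
  ultimately have "xs$k \<le> 0" using vleD[of xs z k] by (simp add: z_def)
  thus False using xpos by (metis not_le)
qed


end

context qve_split begin

definition ff where "ff y = matrix_inv (N - bl_right b1 y) *v (a + P *v y + b2 y y)"

lemma Jinv: "0 \<le> y \<Longrightarrow> y \<le> xs \<Longrightarrow> invertible (N - bl_right b1 y)"
  by (rule inv_from_pos) (rule Jpos)

lemma Jle: assumes "0 \<le> y" "y \<le> xs" "(N - bl_right b1 y) *v w1 \<le> (N - bl_right b1 y) *v w2"
  shows "w1 \<le> w2"
proof -
  have "0 \<le> (N - bl_right b1 y) *v (w2 - w1)" using assms(3) by (simp add: matrix_vector_mult_diff_distrib)
  hence "0 \<le> w2 - w1" by (rule Jpos[OF assms(1,2)])
  thus ?thesis by simp
qed

lemma Jff: "0 \<le> y \<Longrightarrow> y \<le> xs \<Longrightarrow> (N - bl_right b1 y) *v ff y = a + P *v y + b2 y y"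
  unfolding ff_def by (rule matrix_inv_mv[OF Jinv])

lemma g0: "0 \<le> y \<Longrightarrow> 0 \<le> a + P *v y + b2 y y"
  using a0 mv_nonneg[OF P0] nb_nonneg[OF b2] by (simp add: add_nonneg_nonneg)

lemma gmono: "0 \<le> y \<Longrightarrow> y \<le> y' \<Longrightarrow> a + P *v y + b2 y y \<le> a + P *v y' + b2 y' y'"
proof -
  assume h: "0 \<le> y" "y \<le> y'"
  have "P *v y \<le> P *v y'"
    using mv_nonneg[OF P0, of "y' - y"] h by (simp add: matrix_vector_mult_diff_distrib)
  moreover have "b2 y y \<le> b2 y' y'" by (rule nb_mono[OF b2 h(1) h(2) h(1) h(2)])
  ultimately show ?thesis by (simp add: add_mono)
qed

lemma F1: assumes "0 \<le> y" "y \<le> xs" shows "0 \<le> ff y"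
  by (rule Jpos[OF assms]) (simp add: Jff[OF assms] g0[OF assms(1)])

lemma F2: assumes "0 \<le> y" "y \<le> xs" shows "ff y \<le> xs"
proof (rule Jle[OF assms])
  have "(N - bl_right b1 y) *v xs = a + P *v xs + b2 xs xs + b1 xs (xs - y)"
    unfolding Jmv Nmv Mxs bsplit bilinear_rsub[OF bl1] by (simp add: algebra_simps)
  moreover have "0 \<le> b1 xs (xs - y)" by (rule nb_nonneg[OF b1 xs0]) (use assms in simp)
  ultimately have "a + P *v xs + b2 xs xs \<le> (N - bl_right b1 y) *v xs" by simp
  thus "(N - bl_right b1 y) *v ff y \<le> (N - bl_right b1 y) *v xs"
    unfolding Jff[OF assms] by (rule order_trans[OF gmono[OF assms]])
qed

lemma F3: assumes "0 \<le> y" "y \<le> y'" "y' \<le> xs" shows "ff y \<le> ff y'"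
proof -
  have y'0: "0 \<le> y'" using assms(1,2) by (rule order_trans)
  have yx: "y \<le> xs" using assms(2,3) by (rule order_trans)
  have v0: "0 \<le> ff y" by (rule F1[OF assms(1) yx])
  have "(N - bl_right b1 y') *v ff y = (N - bl_right b1 y) *v ff y - (b1 (ff y) y' - b1 (ff y) y)"
    unfolding Jmv by simp
  moreover have "b1 (ff y) y \<le> b1 (ff y) y'" by (rule nb_mono[OF b1 v0 order_refl assms(1,2)])
  ultimately have "(N - bl_right b1 y') *v ff y \<le> (N - bl_right b1 y) *v ff y" by simp
  also have "\<dots> \<le> (N - bl_right b1 y') *v ff y'"
    unfolding Jff[OF assms(1) yx] Jff[OF y'0 assms(3)] by (rule gmono[OF assms(1,2)])
  finally show ?thesis by (rule Jle[OF y'0 assms(3)])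
qed

lemma F4: assumes "0 \<le> y" "y \<le> xs" "Fmap M a b y \<le> 0" shows "y \<le> ff y"
proof (rule Jle[OF assms(1,2)])
  have "(N - bl_right b1 y) *v y = (a + P *v y + b2 y y) + Fmap M a b y"
    unfolding Jmv Nmv Fmap_def bsplit by (simp add: algebra_simps)
  thus "(N - bl_right b1 y) *v y \<le> (N - bl_right b1 y) *v ff y"
    unfolding Jff[OF assms(1,2)] using assms(3) by (metis add_le_same_cancel1)
qed

end

lemma nb_zero: "nonneg_bilinear (\<lambda>(x::real^'n) (y::real^'n). (0::real^'n))"
  by (simp add: nonneg_bilinear_def bilinear_def linear_zero)

theorem mainTheorem10:
  fixes M N P :: "real^'n^'n" and a xs :: "real^'n"
    and b b1 b2 :: "real^'n \<Rightarrow> real^'n \<Rightarrow> real^'n"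
    and J :: "real^'n \<Rightarrow> real^'n^'n" and g f fhat :: "real^'n \<Rightarrow> real^'n"
  assumes M: "nonsingular_M_matrix M"
    and a: "0 \<le> a"
    and b: "nonneg_bilinear b"
    and H: "hypH M a b xs"
    and b1: "nonneg_bilinear b1" and b2: "nonneg_bilinear b2"
    and bsplit: "\<And>x y. b x y = b1 x y + b2 x y"
    and N: "M_matrix N" and P: "0 \<le> P" and MNP: "M = N - P"
    and J_def: "\<And>x. J x = N - bl_right b1 x"
    and g_def: "\<And>x. g x = a + P *v x + b2 x x"
    and f_def: "\<And>x. f x = matrix_inv (J x) *v g x"
    and fhat_def: "\<And>x. fhat x = matrix_inv (M - bl_right b x) *v a"
    and x0: "0 \<le> x" and xle: "x \<le> xs" and Fx: "Fmap M a b x \<le> 0"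
  shows "(fhat ^^ k) x \<ge> (f ^^ k) x"
proof -
  have Q: "qve M a xs b"
    using M a b H by (auto simp: qve_def nonsingular_M_matrix_def hypH_def intro: Mmat_Z)
  interpret S: qve_split M a xs b N P b1 b2
    by (rule qve_split.intro[OF Q]) (unfold_locales, use b1 b2 bsplit N P MNP Mmat_Z in auto)
  interpret T: qve_split M a xs b M 0 b "\<lambda>x y. 0"
    by (rule qve_split.intro[OF Q]) (unfold_locales, use b nb_zero M Mmat_Z in \<open>auto simp: nonsingular_M_matrix_def\<close>)
  have fS: "f = S.ff" by (rule ext) (simp add: f_def J_def g_def S.ff_def)
  have fT: "fhat = T.ff" by (rule ext) (simp add: fhat_def T.ff_def)
  have F5: "Fmap M a b (T.ff y) \<le> 0" if y: "0 \<le> y" "y \<le> xs" "Fmap M a b y \<le> 0" for y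
  proof -
    define u where "u = T.ff y"
    have "M *v u - b u y = a" using T.Jff[OF y(1,2)] unfolding T.Jmv u_def by simp
    hence "Fmap M a b u = - b u (u - y)"
      unfolding Fmap_def bilinear_rsub[OF T.bl1] by (simp add: algebra_simps)
    moreover have "0 \<le> b u (u - y)"
      using T.F1[OF y(1,2)] T.F4[OF y] nb_nonneg[OF b] by (simp add: u_def)
    ultimately show ?thesis by (simp add: u_def)
  qed
  have F6: "S.ff y \<le> T.ff y" if y: "0 \<le> y" "y \<le> xs" "Fmap M a b y \<le> 0" for y
  proof (rule T.Jle[OF y(1,2)])
    define v where "v = S.ff y"
    have yv: "y \<le> v" using S.F4[OF y] by (simp add: v_def)
    have e: "N *v v - b1 v y = a + P *v y + b2 y y" using S.Jff[OF y(1,2)] unfolding S.Jmv v_def .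
    have "(M - bl_right b y) *v v = a - (P *v (v - y) + (b2 v y - b2 y y))"
      unfolding T.Jmv using e unfolding S.Nmv bsplit
      by (simp add: matrix_vector_mult_diff_distrib algebra_simps)
    moreover have "0 \<le> P *v (v - y)" by (rule mv_nonneg[OF P]) (use yv in simp)
    moreover have "0 \<le> b2 v y - b2 y y" using nb_mono[OF b2 y(1) yv y(1) order_refl] by simp
    ultimately have "(M - bl_right b y) *v v \<le> a"
      by (metis add_nonneg_nonneg diff_le_eq le_add_same_cancel1)
    thus "(M - bl_right b y) *v S.ff y \<le> (M - bl_right b y) *v T.ff y"
      using T.Jff[OF y(1,2)] by (simp add: v_def)
  qed
  have inv: "0 \<le> (T.ff ^^ k) x \<and> (T.ff ^^ k) x \<le> xs \<and> Fmap M a b ((T.ff ^^ k) x) \<le> 0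
     \<and> 0 \<le> (S.ff ^^ k) x \<and> (S.ff ^^ k) x \<le> xs \<and> (S.ff ^^ k) x \<le> (T.ff ^^ k) x" for k
  proof (induction k)
    case 0 then show ?case using x0 xle Fx by simp
  next
    case (Suc k)
    define u where "u = (T.ff ^^ k) x"
    define v where "v = (S.ff ^^ k) x"
    have h: "0 \<le> u" "u \<le> xs" "Fmap M a b u \<le> 0" "0 \<le> v" "v \<le> xs" "v \<le> u"
      using Suc by (simp_all add: u_def v_def)
    have "S.ff v \<le> S.ff u" by (rule S.F3[OF h(4) h(6) h(2)])
    also have "\<dots> \<le> T.ff u" by (rule F6[OF h(1-3)])
    finally have "S.ff v \<le> T.ff u" .
    thus ?case using T.F1[OF h(1,2)] T.F2[OF h(1,2)] F5[OF h(1-3)] S.F1[OF h(4,5)] S.F2[OF h(4,5)]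
      by (simp add: u_def v_def)
  qed
  thus ?thesis unfolding fS fT by simp
qed

end
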